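(* Let $r\ge1$, $\mathbf{m}\in\mathbb{N}^r$, $m=m_1+\cdots+m_r$, $\mathbf{f}\in\mathbb{C}^r$, $b\in\mathbb{C}$, and let $0\le k\le m$ be integers. Then $$ \sum_{i=0}^{k}\frac{(-k)_i(b)_i}{(-m)_{i}\,i!}\,{}_{r+1}F_{r}\!\left(\begin{matrix}-i,\mathbf{f}+\mathbf{m}\\\mathbf{f}\end{matrix}\right) =\frac{(-b-m)_k}{(-m)_k}\,{}_{r+2}F_{r+1}\!\left(\begin{matrix}-k,b,\mathbf{f}+\mathbf{m}\\ b+m-k+1,\mathbf{f}\end{matrix}\right). $$
   Context: $(a)_k=\Gamma(a+k)/\Gamma(a)$. $\mathbf{f}+\mathbf{m}$ is componentwise; a vector among hypergeometric parameters means its components are listed. ${}_pF_q(\mathbf{a};\mathbf{b})$ denotes the terminating generalized hypergeometric series evaluated at argument $1$. Parameters are assumed such that no denominator in these terminating series vanishes. *)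

theory Defs
  imports "HOL-Analysis.Analysis"
begin

text \<open>Terminating generalized hypergeometric series at argument 1, given the
numerator parameter list as, denominator parameter list bs, truncated at index n
(the series terminates at n because one numerator parameter is -n).\<close>
definition hyp_term :: "complex list \<Rightarrow> complex list \<Rightarrow> nat \<Rightarrow> complex" where
  "hyp_term as bs j =
     (\<Prod>a\<leftarrow>as. pochhammer a j) / ((\<Prod>b\<leftarrow>bs. pochhammer b j) * of_nat (fact j))"

definition hyp_F :: "nat \<Rightarrow> complex list \<Rightarrow> complex list \<Rightarrow> complex" where
  "hyp_F n as bs = (\<Sum>j\<le>n. hyp_term as bs j)"

end

theory Submission
  imports Defs
begin

lemma aux_fact:
  fixes j t :: nat
  shows "pochhammer (- of_nat (j+t) :: complex) j / of_nat (fact (j+t)) = (-1)^j / of_nat (fact t)"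
proof -
  have f0: "(fact (t+j) :: complex) = fact t * pochhammer (of_nat t + 1) j"
    unfolding pochhammer_fact pochhammer_product'[of 1 t j] by (simp add: add_ac)
  have f: "(fact (j+t) :: complex) = fact t * pochhammer (of_nat t + 1) j"
    using f0 by (metis add.commute)
  have p: "pochhammer (- of_nat (j+t) :: complex) j = (-1)^j * pochhammer (of_nat t + 1) j"
    using pochhammer_minus[of "of_nat (j+t) :: complex" j] by simp
  have nz: "pochhammer (of_nat t + 1 :: complex) j \<noteq> 0"
  proof
    assume "pochhammer (of_nat t + 1 :: complex) j = 0"
    then obtain k where "(of_nat t + 1 :: complex) = - of_nat k" by (auto simp: pochhammer_eq_0_iff)
    then have "(of_nat t + 1 :: complex) + of_nat k = 0" by (simp only: eq_neg_iff_add_eq_0)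
    then have "(of_nat (t+1+k) :: complex) = 0" by (simp add: ac_simps)
    then show False by (simp only: of_nat_eq_0_iff)
  qed
  have "pochhammer (- of_nat (j+t) :: complex) j / of_nat (fact (j+t)) = pochhammer (- of_nat (j+t) :: complex) j / fact (j+t)"
    by simp
  also have "\<dots> = (-1)^j / fact t" unfolding p f using nz by simp
  finally show ?thesis by simp
qed

lemma key:
  fixes b :: complex and j k m :: nat
  assumes jk: "j \<le> k" and km: "k \<le> m"
  shows "(\<Sum>i\<le>k. pochhammer (- of_nat k) i * pochhammer b i
             / (pochhammer (- of_nat m) i * of_nat (fact i)) * pochhammer (- of_nat i) j)
       = (-1)^j * pochhammer (- of_nat k) j * pochhammer b j * pochhammer (- b - of_nat m) (k-j)
           / pochhammer (- of_nat m) k"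
proof -
  define g where "g i = pochhammer (- of_nat k) i * pochhammer b i
             / (pochhammer (- of_nat m) i * of_nat (fact i)) * pochhammer (- of_nat i :: complex) j" for i
  have "(\<Sum>i\<le>k. g i) = (\<Sum>i\<in>{j..k}. g i)"
  proof (rule sum.mono_neutral_right)
    show "\<forall>i\<in>{..k} - {j..k}. g i = 0"
      by (auto simp: g_def pochhammer_of_nat_eq_0_iff)
  qed auto
  also have "\<dots> = (\<Sum>t\<in>{0..k-j}. g (t + j))"
    using sum.shift_bounds_cl_nat_ivl[of g 0 j "k-j"] jk by simp
  also have "\<dots> = (\<Sum>t\<in>{0..k-j}. ((-1)^j * pochhammer (- of_nat k) j * pochhammer b j / pochhammer (- of_nat m) j) *
       ((pochhammer (b + of_nat j) t * pochhammer (- of_nat (k-j)) t) / (of_nat (fact t) * pochhammer (- of_nat m + of_nat j) t)))"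
  proof (rule sum.cong[OF refl])
    fix t assume t: "t \<in> {0..k-j}"
    have nz1: "pochhammer (- of_nat m :: complex) j \<noteq> 0"
      using jk km by (simp add: pochhammer_of_nat_eq_0_iff)
    have nz2: "pochhammer (- of_nat m + of_nat j :: complex) t \<noteq> 0"
    proof
      assume "pochhammer (- of_nat m + of_nat j :: complex) t = 0"
      then have "pochhammer (- of_nat m :: complex) (j + t) = 0"
        by (simp add: pochhammer_product')
      then show False using t jk km by (simp add: pochhammer_of_nat_eq_0_iff)
    qed
    have e1: "(- of_nat k + of_nat j :: complex) = - of_nat (k-j)" using jk by (simp add: of_nat_diff)
    have "g (t + j) = pochhammer (- of_nat k) (j+t) * pochhammer b (j+t)
             / pochhammer (- of_nat m) (j+t) * (pochhammer (- of_nat (j+t) :: complex) j / of_nat (fact (j+t)))"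
      by (simp add: g_def add.commute)
    also have "\<dots> = pochhammer (- of_nat k) (j+t) * pochhammer b (j+t)
             / pochhammer (- of_nat m) (j+t) * ((-1)^j / of_nat (fact t))"
      by (simp only: aux_fact)
    also have "\<dots> = ((-1)^j * pochhammer (- of_nat k) j * pochhammer b j / pochhammer (- of_nat m) j) *
       ((pochhammer (b + of_nat j) t * pochhammer (- of_nat k + of_nat j) t) / (of_nat (fact t) * pochhammer (- of_nat m + of_nat j) t))"
      unfolding pochhammer_product' using nz1 nz2 by (simp add: field_simps)
    finally show "g (t + j) = ((-1)^j * pochhammer (- of_nat k) j * pochhammer b j / pochhammer (- of_nat m) j) *
       ((pochhammer (b + of_nat j) t * pochhammer (- of_nat (k-j)) t) / (of_nat (fact t) * pochhammer (- of_nat m + of_nat j) t))"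
      by (simp only: e1)
  qed
  also have "\<dots> = ((-1)^j * pochhammer (- of_nat k) j * pochhammer b j / pochhammer (- of_nat m) j) *
       (pochhammer ((- of_nat m + of_nat j) - (b + of_nat j)) (k-j) / pochhammer (- of_nat m + of_nat j) (k-j))"
    unfolding sum_distrib_left[symmetric]
  proof (subst Vandermonde_pochhammer)
    show "\<forall>i\<in>{0..<k-j}. - of_nat m + of_nat j \<noteq> - (of_nat i :: complex)"
    proof
      fix i assume i: "i \<in> {0..<k-j}"
      show "- of_nat m + of_nat j \<noteq> - (of_nat i :: complex)"
      proof
        assume "- of_nat m + of_nat j = - (of_nat i :: complex)"
        then have "(of_nat (i + j) :: complex) = of_nat m" by (simp add: algebra_simps)
        then have "i + j = m" by (simp only: of_nat_eq_iff)
        then show False using i jk km by simp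
      qed
    qed
  qed simp
  also have "\<dots> = (-1)^j * pochhammer (- of_nat k) j * pochhammer b j * pochhammer (- b - of_nat m) (k-j)
           / pochhammer (- of_nat m) k"
  proof -
    have "pochhammer (- of_nat m :: complex) k = pochhammer (- of_nat m) j * pochhammer (- of_nat m + of_nat j) (k-j)"
      using pochhammer_product'[of "- of_nat m :: complex" j "k-j"] jk by simp
    moreover have "(- of_nat m + of_nat j) - (b + of_nat j) = - b - (of_nat m :: complex)" by simp
    moreover have "pochhammer (- of_nat m - b) (k-j) = pochhammer (- b - of_nat m :: complex) (k-j)"
      by (rule arg_cong[where f="\<lambda>x. pochhammer x (k-j)"]) (simp add: algebra_simps)
    ultimately show ?thesis by simp
  qed
  finally show ?thesis by (simp add: g_def)
qed

lemma pfact: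
  fixes b :: complex and j k m :: nat
  assumes jk: "j \<le> k"
  shows "pochhammer (- b - of_nat m) k = (-1)^j * pochhammer (- b - of_nat m) (k-j) * pochhammer (b + of_nat m - of_nat k + 1) j"
proof -
  have "pochhammer (- b - of_nat m) k = pochhammer (- b - of_nat m) (k-j) * pochhammer (- b - of_nat m + of_nat (k-j)) j"
    using pochhammer_product'[of "- b - of_nat m" "k-j" j] jk by simp
  also have "pochhammer (- b - of_nat m + of_nat (k-j)) j = pochhammer (- (b + of_nat m - of_nat (k-j))) j"
    by (simp add: algebra_simps)
  also have "\<dots> = (-1)^j * pochhammer (b + of_nat m - of_nat (k-j) - of_nat j + 1) j"
    by (rule pochhammer_minus)
  also have "b + of_nat m - of_nat (k-j) - of_nat j + 1 = b + of_nat m - of_nat k + 1"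
    using jk by (simp add: of_nat_diff)
  finally show ?thesis by simp
qed

theorem lemma4:
  fixes r :: nat and mv :: "nat \<Rightarrow> nat" and fv :: "nat \<Rightarrow> complex"
    and b :: complex and m k :: nat
  assumes "r \<ge> 1"
    and "m = (\<Sum>l<r. mv l)"
    and "k \<le> m"
    and "\<And>l j. l < r \<Longrightarrow> j \<le> k \<Longrightarrow> pochhammer (fv l) j \<noteq> 0"
    and "\<And>j. j \<le> k \<Longrightarrow> pochhammer (b + of_nat m - of_nat k + 1) j \<noteq> 0"
  shows "(\<Sum>i\<le>k. pochhammer (- of_nat k) i * pochhammer b i
             / (pochhammer (- of_nat m) i * of_nat (fact i))
           * hyp_F i (- of_nat i # map (\<lambda>l. fv l + of_nat (mv l)) [0..<r])
                     (map fv [0..<r]))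
       = pochhammer (- b - of_nat m) k / pochhammer (- of_nat m) k
           * hyp_F k (- of_nat k # b # map (\<lambda>l. fv l + of_nat (mv l)) [0..<r])
                     ((b + of_nat m - of_nat k + 1) # map fv [0..<r])"
proof -
  define A where "A = map (\<lambda>l. fv l + of_nat (mv l)) [0..<r]"
  define B where "B = map fv [0..<r]"
  define c where "c = b + of_nat m - of_nat k + 1"
  define Q where "Q j = (\<Prod>a\<leftarrow>A. pochhammer a j) / (\<Prod>a\<leftarrow>B. pochhammer a j)" for j
  define \<alpha> where "\<alpha> i = pochhammer (- of_nat k) i * pochhammer b i
             / (pochhammer (- of_nat m) i * of_nat (fact i))" for i
  have h1: "hyp_term (- of_nat i # A) B j = pochhammer (- of_nat i) j * Q j / of_nat (fact j)" for i j
    by (simp add: hyp_term_def Q_def)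
  have h2: "hyp_term (- of_nat k # b # A) (c # B) j
      = pochhammer (- of_nat k) j * pochhammer b j * Q j / (pochhammer c j * of_nat (fact j))" for j
    by (simp add: hyp_term_def Q_def mult_ac)
  have "(\<Sum>i\<le>k. \<alpha> i * hyp_F i (- of_nat i # A) B)
      = (\<Sum>i\<le>k. \<Sum>j\<le>k. \<alpha> i * (pochhammer (- of_nat i) j * Q j / of_nat (fact j)))"
  proof (rule sum.cong[OF refl])
    fix i assume i: "i \<in> {..k}"
    have "hyp_F i (- of_nat i # A) B = (\<Sum>j\<le>k. pochhammer (- of_nat i) j * Q j / of_nat (fact j))"
      unfolding hyp_F_def h1
    proof (rule sum.mono_neutral_left)
      show "\<forall>j\<in>{..k} - {..i}. pochhammer (- of_nat i :: complex) j * Q j / of_nat (fact j) = 0"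
        by (auto simp: pochhammer_of_nat_eq_0_iff)
    qed (use i in auto)
    then show "\<alpha> i * hyp_F i (- of_nat i # A) B = (\<Sum>j\<le>k. \<alpha> i * (pochhammer (- of_nat i) j * Q j / of_nat (fact j)))"
      by (simp add: sum_distrib_left)
  qed
  also have "\<dots> = (\<Sum>j\<le>k. \<Sum>i\<le>k. \<alpha> i * (pochhammer (- of_nat i) j * Q j / of_nat (fact j)))"
    by (rule sum.swap)
  also have "\<dots> = (\<Sum>j\<le>k. (\<Sum>i\<le>k. \<alpha> i * pochhammer (- of_nat i) j) * (Q j / of_nat (fact j)))"
    by (simp add: sum_distrib_right sum_divide_distrib mult.assoc)
  also have "\<dots> = (\<Sum>j\<le>k. pochhammer (- b - of_nat m) k / pochhammer (- of_nat m) k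
        * (pochhammer (- of_nat k) j * pochhammer b j * Q j / (pochhammer c j * of_nat (fact j))))"
  proof (rule sum.cong[OF refl])
    fix j assume j: "j \<in> {..k}"
    then have jk: "j \<le> k" by simp
    have cnz: "pochhammer c j \<noteq> 0" using assms(5) jk by (simp add: c_def)
    have "(\<Sum>i\<le>k. \<alpha> i * pochhammer (- of_nat i) j)
       = (-1)^j * pochhammer (- of_nat k) j * pochhammer b j * pochhammer (- b - of_nat m) (k-j)
           / pochhammer (- of_nat m) k"
      unfolding \<alpha>_def by (rule key[OF jk assms(3)])
    moreover have "pochhammer (- b - of_nat m) k = (-1)^j * pochhammer (- b - of_nat m) (k-j) * pochhammer c j"
      unfolding c_def by (rule pfact[OF jk])
    ultimately show "(\<Sum>i\<le>k. \<alpha> i * pochhammer (- of_nat i) j) * (Q j / of_nat (fact j))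
       = pochhammer (- b - of_nat m) k / pochhammer (- of_nat m) k
        * (pochhammer (- of_nat k) j * pochhammer b j * Q j / (pochhammer c j * of_nat (fact j)))"
      using cnz by (simp add: field_simps power2_eq_square[symmetric] power_mult_distrib[symmetric])
  qed
  also have "\<dots> = pochhammer (- b - of_nat m) k / pochhammer (- of_nat m) k
           * hyp_F k (- of_nat k # b # A) (c # B)"
    by (simp add: hyp_F_def h2 sum_distrib_left)
  finally show ?thesis by (simp add: A_def B_def c_def \<alpha>_def)
qed

end
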